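(* For every $a>0$ and $X,Y\in L^2(\Omega,\mathbb{R})$, $$\Big|\int_0^1\Big(\mathbf{1}_{|X-\lambda Y|\le1}\frac{\operatorname{sgn}(X-\lambda Y)}{\sqrt{|X-\lambda Y|}+a}-\mathbf{1}_{|X|\le1}\frac{\operatorname{sgn}(X)}{\sqrt{|X|}+a}\Big)d\lambda\Big|\le\frac{3\pi}{2}\frac{1}{\sqrt{|X|}}\quad\mathbb{P}\text{-a.s.}$$ Furthermore, if $F_{\mathcal{L}(X)}$ is continuous and $H:\mathcal{P}_2(\mathbb{R}^2)\to\mathbb{R}_+$ satisfies $H(\mathcal{L}(X,Y))\to0$ as $\|Y\|_{L^2(\Omega,\mathbb{R})}\to0$, then $$\int_0^1\Big(\mathbf{1}_{|X-\lambda Y|\le1}\frac{\operatorname{sgn}(X-\lambda Y)}{\sqrt{|X-\lambda Y|}+H(\mathcal{L}(X,Y))}-\mathbf{1}_{|X|\le1}\frac{\operatorname{sgn}(X)}{\sqrt{|X|}+H(\mathcal{L}(X,Y))}\Big)d\lambda\to0$$ in probability as $\|Y\|_{L^2(\Omega,\mathbb{R})}\to0$ (with $X$ fixed).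
   Context: $(\Omega,\mathcal{F},\mathbb{P})$ is a probability space; $F_{\mathcal{L}(X)}$ denotes the distribution function of $X$; $\mathcal{P}_2(\mathbb{R}^2)$ is the set of Borel probability measures on $\mathbb{R}^2$ with finite second moment; $\mathcal{L}(X,Y)$ the joint law. *)

theory Defs
  imports "HOL-Probability.Probability"
begin

definition phi :: "real \<Rightarrow> real \<Rightarrow> real" where
  "phi a x = (if \<bar>x\<bar> \<le> 1 then sgn x / (sqrt \<bar>x\<bar> + a) else 0)"

definition lam_int :: "real \<Rightarrow> real \<Rightarrow> real \<Rightarrow> real" where
  "lam_int a x y = (LINT l:{0..1}|lborel. (phi a (x - l * y) - phi a x))"

definition L2 :: "'a measure \<Rightarrow> ('a \<Rightarrow> real) \<Rightarrow> bool" where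
  "L2 M X \<longleftrightarrow> X \<in> borel_measurable M \<and> integrable M (\<lambda>w. (X w)\<^sup>2)"

definition L2norm :: "'a measure \<Rightarrow> ('a \<Rightarrow> real) \<Rightarrow> real" where
  "L2norm M X = sqrt (\<integral>w. (X w)\<^sup>2 \<partial>M)"

definition P2 :: "(real \<times> real) measure \<Rightarrow> bool" where
  "P2 \<mu> \<longleftrightarrow> prob_space \<mu> \<and> sets \<mu> = sets borel \<and>
     integrable \<mu> (\<lambda>z. (fst z)\<^sup>2 + (snd z)\<^sup>2)"

definition law2 :: "'a measure \<Rightarrow> ('a \<Rightarrow> real) \<Rightarrow> ('a \<Rightarrow> real) \<Rightarrow> (real \<times> real) measure" where
  "law2 M X Y = distr M borel (\<lambda>w. (X w, Y w))"

end

theory Submission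
  imports Defs
begin

lemma phi_meas[measurable]: "phi a \<in> borel_measurable borel"
  unfolding phi_def[abs_def] by measurable

lemma lint_bound:
  fixes f :: "real \<Rightarrow> real"
  assumes [measurable]: "f \<in> borel_measurable borel" and b: "\<And>l. l \<in> {0..1} \<Longrightarrow> \<bar>f l\<bar> \<le> C"
  shows "\<bar>LINT l:{0..1}|lborel. f l\<bar> \<le> C"
proof -
  have C0: "0 \<le> C" using b[of 0] by auto
  have int: "set_integrable lborel {0..1} f"
    unfolding set_integrable_def
    by (rule integrableI_bounded_set_indicator[where B=C]) (use b in auto)
  have int2: "set_integrable lborel {0..1::real} (\<lambda>l. C)"
    unfolding set_integrable_def
    by (rule integrableI_bounded_set_indicator[where B=C]) (use C0 in simp_all)
  have "\<bar>LINT l:{0..1}|lborel. f l\<bar> \<le> (LINT l:{0..1::real}|lborel. C)"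
    unfolding set_lebesgue_integral_def
    apply (rule integral_abs_bound_integral)
    using int int2 b unfolding set_integrable_def by (auto simp: indicator_def)
  also have "\<dots> = C" by (simp add: set_integral_const)
  finally show ?thesis .
qed

lemma phi_bound: assumes "a \<ge> 0" "u \<noteq> 0" shows "\<bar>phi a u\<bar> \<le> 1 / sqrt \<bar>u\<bar>"
proof -
  have s: "sqrt \<bar>u\<bar> > 0" using assms by auto
  have "\<bar>sgn u / (sqrt \<bar>u\<bar> + a)\<bar> = 1 / (sqrt \<bar>u\<bar> + a)"
    using assms s by (simp add: abs_sgn_eq)
  also have "\<dots> \<le> 1 / sqrt \<bar>u\<bar>" using s assms by (simp add: frac_le)
  finally show ?thesis unfolding phi_def using s by auto
qed

definition gg :: "real \<Rightarrow> real \<Rightarrow> real" where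
  "gg a s = 2 * (s - a * ln (1 + s / a))"

lemma gg_lip: assumes "a > 0" "0 \<le> s2" "s2 \<le> s1"
  shows "0 \<le> gg a s1 - gg a s2 \<and> gg a s1 - gg a s2 \<le> 2 * (s1 - s2)"
proof -
  have p2: "1 + s2/a > 0" using assms by (smt (verit) divide_nonneg_pos)
  have p1: "1 + s1/a > 0" using assms by (smt (verit) divide_nonneg_pos)
  have e1: "1 + s1/a = (a + s1)/a" "1 + s2/a = (a + s2)/a" using assms by (simp_all add: field_simps)
  have q: "(1 + s1/a) / (1 + s2/a) = (a + s1) / (a + s2)" unfolding e1 using assms by simp
  have "ln (1 + s1/a) - ln (1 + s2/a) = ln ((a + s1) / (a + s2))"
    unfolding e1 using assms by (simp add: ln_div)
  moreover have "ln ((a + s1) / (a + s2)) \<ge> 0" using assms by auto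
  moreover have "ln ((a + s1) / (a + s2)) \<le> (a + s1) / (a + s2) - 1"
    using assms by (intro ln_le_minus_one) auto
  moreover have "(a + s1) / (a + s2) - 1 = (s1 - s2) / (a + s2)" using assms by (simp add: field_simps)
  moreover have "a * ((s1 - s2) / (a + s2)) \<le> s1 - s2"
    using assms by (simp add: field_simps mult_right_mono)
  ultimately have "0 \<le> a * (ln (1 + s1/a) - ln (1 + s2/a))" "a * (ln (1 + s1/a) - ln (1 + s2/a)) \<le> s1 - s2"
    using assms by (auto intro: order.trans[OF mult_left_mono])
  then show ?thesis unfolding gg_def by (simp add: algebra_simps)
qed

definition Phi :: "real \<Rightarrow> real \<Rightarrow> real" where
  "Phi a u = gg a (sqrt (min \<bar>u\<bar> 1))"

lemma sqrt_diff_le: assumes "0 \<le> t2" "t2 \<le> t1" shows "sqrt t1 - sqrt t2 \<le> sqrt (t1 - t2)"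
proof -
  have "sqrt t1 \<le> sqrt t2 + sqrt (t1 - t2)"
  proof (rule real_le_lsqrt)
    show "(sqrt t2 + sqrt (t1 - t2))\<^sup>2 \<ge> t1"
      using assms by (simp add: power2_eq_square algebra_simps)
  qed (use assms in auto)
  then show ?thesis by simp
qed

lemma Phi_hoelder: assumes "a > 0" shows "\<bar>Phi a u - Phi a v\<bar> \<le> 2 * sqrt \<bar>u - v\<bar>"
proof -
  have key: "\<bar>Phi a u - Phi a v\<bar> \<le> 2 * sqrt \<bar>u - v\<bar>" if "min \<bar>v\<bar> 1 \<le> min \<bar>u\<bar> 1" for u v
  proof -
    let ?t1 = "min \<bar>u\<bar> 1" and ?t2 = "min \<bar>v\<bar> 1"
    have "sqrt ?t2 \<le> sqrt ?t1" using that by simp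
    then have "\<bar>Phi a u - Phi a v\<bar> \<le> 2 * (sqrt ?t1 - sqrt ?t2)"
      using gg_lip[OF assms, of "sqrt ?t2" "sqrt ?t1"] unfolding Phi_def by auto
    also have "\<dots> \<le> 2 * sqrt (?t1 - ?t2)" using sqrt_diff_le[of ?t2 ?t1] that by auto
    also have "?t1 - ?t2 \<le> \<bar>u - v\<bar>" by auto
    then have "2 * sqrt (?t1 - ?t2) \<le> 2 * sqrt \<bar>u - v\<bar>" by simp
    finally show ?thesis .
  qed
  show ?thesis
  proof (cases "min \<bar>v\<bar> 1 \<le> min \<bar>u\<bar> 1")
    case True then show ?thesis by (rule key)
  next
    case False then have "min \<bar>u\<bar> 1 \<le> min \<bar>v\<bar> 1" by linarith
    from key[OF this] show ?thesis by (simp add: abs_minus_commute)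
  qed
qed

lemma gg_sqrt_deriv: assumes "a > 0" "t > 0"
  shows "((\<lambda>t. gg a (sqrt t)) has_real_derivative 1 / (sqrt t + a)) (at t)"
proof -
  have st: "sqrt t > 0" using assms by auto
  have pos: "1 + sqrt t / a > 0" using assms st by (smt (verit) divide_pos_pos)
  show ?thesis unfolding gg_def
    using assms st pos apply (auto intro!: derivative_eq_intros simp: field_simps)
    apply (subst divide_eq_eq)
    subgoal
    proof -
      have "a*(a*(sqrt t*2)) > 0" "a*(sqrt t*(sqrt t*2)) > 0" using assms st by simp_all
      then have "a*(a*(sqrt t*2)) + a*(sqrt t*(sqrt t*2)) \<noteq> 0" by linarith
      then show ?thesis by (simp only: if_True) (simp add: algebra_simps)
    qed
    done
qed

lemma Phi_deriv: assumes "a > 0" "u \<noteq> -1" "u \<noteq> 0" "u \<noteq> 1"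
  shows "(Phi a has_real_derivative phi a u) (at u)"
proof -
  consider "u > 1" | "u < -1" | "0 < u \<and> u < 1" | "-1 < u \<and> u < 0" using assms by linarith
  then show ?thesis
  proof cases
    case 1
    show ?thesis
      apply (rule has_field_derivative_transform_within_open[where f="\<lambda>_. gg a 1" and S="{1<..}"])
      using 1 by (auto simp: phi_def Phi_def)
  next
    case 2
    show ?thesis
      apply (rule has_field_derivative_transform_within_open[where f="\<lambda>_. gg a 1" and S="{..<-1}"])
      using 2 by (auto simp: phi_def Phi_def)
  next
    case 3
    have "phi a u = 1 / (sqrt u + a)" using 3 by (simp add: phi_def)
    then show ?thesis
      apply simp
      apply (rule has_field_derivative_transform_within_open[where f="\<lambda>t. gg a (sqrt t)" and S="{0<..<1}"])
      using 3 gg_sqrt_deriv[OF assms(1), of u] by (auto simp: Phi_def)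
  next
    case 4
    have "phi a u = - (1 / (sqrt (-u) + a))" using 4 by (simp add: phi_def)
    moreover have "((\<lambda>t. gg a (sqrt (-t))) has_real_derivative (1 / (sqrt (-u) + a)) * (-1)) (at u)"
      apply (rule DERIV_chain2[where f="\<lambda>t. gg a (sqrt t)" and g=uminus])
      using gg_sqrt_deriv[OF assms(1), of "-u"] 4 by (auto intro!: derivative_eq_intros)
    ultimately show ?thesis
      apply simp
      apply (rule has_field_derivative_transform_within_open[where f="\<lambda>t. gg a (sqrt (-t))" and S="{-1<..<0}"])
      using 4 by (auto simp: Phi_def)
  qed
qed

lemma Phi_cont: assumes "a > 0" shows "continuous_on UNIV (Phi a)"
proof -
  have h: "\<And>x. 1 + sqrt (min \<bar>x\<bar> 1) / a > 0" using assms by (simp add: add_pos_nonneg)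
  have "continuous_on UNIV (\<lambda>u. 2 * (sqrt (min \<bar>u\<bar> 1) - a * ln (1 + sqrt (min \<bar>u\<bar> 1) / a)))"
    apply (intro continuous_intros)
    subgoal using assms by simp
    subgoal using h by (smt (verit))
    done
  then show ?thesis unfolding Phi_def[abs_def] gg_def by simp
qed

lemma phi_bound_a: assumes "a > 0" shows "\<bar>phi a u\<bar> \<le> 1 / a"
proof -
  have "\<bar>sgn u / (sqrt \<bar>u\<bar> + a)\<bar> \<le> 1 / (sqrt \<bar>u\<bar> + a)"
    using assms by (simp add: abs_sgn_eq)
  also have "\<dots> \<le> 1 / a" using assms by (simp add: frac_le)
  finally show ?thesis unfolding phi_def using assms by auto
qed

lemma phi_int: assumes a: "a > 0" and y: "y \<noteq> 0"
  shows "((\<lambda>l. phi a (x - l*y)) has_integral (Phi a x - Phi a (x - y))/y) {0..1}"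
proof -
  let ?f = "\<lambda>l. - Phi a (x - l*y) / y"
  have "((\<lambda>l. phi a (x - l*y)) has_integral (?f 1 - ?f 0)) {0..1}"
  proof (rule fundamental_theorem_of_calculus_interior_strong[where S="{(x+1)/y, x/y, (x-1)/y}"])
    show "continuous_on {0..1} ?f"
      by (intro continuous_intros continuous_on_compose2[OF Phi_cont[OF a]]) (use y in auto)
    fix l assume l: "l \<in> {0<..<1} - {(x+1)/y, x/y, (x-1)/y}"
    have ne: "x - l*y \<noteq> -1" "x - l*y \<noteq> 0" "x - l*y \<noteq> 1"
      using l y by (auto simp: field_simps)
    have "((\<lambda>l. Phi a (x - l*y)) has_real_derivative phi a (x - l*y) * (-y)) (at l)"
      apply (rule DERIV_chain2[where f="Phi a" and g="\<lambda>l. x - l*y"])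
      using Phi_deriv[OF a ne] by (auto intro!: derivative_eq_intros)
    then have "(?f has_real_derivative - (phi a (x - l*y) * (-y)) / y) (at l)"
      by (auto intro!: derivative_eq_intros)
    then show "(?f has_vector_derivative phi a (x - l*y)) (at l)"
      using y by (simp add: has_real_derivative_iff_has_vector_derivative)
  qed auto
  moreover have "?f 1 - ?f 0 = (Phi a x - Phi a (x - y))/y" by (simp add: diff_divide_distrib)
  ultimately show ?thesis by simp
qed

lemma inv_sqrt_le: assumes "0 < q" "q \<le> k\<^sup>2 * p" "0 < k" shows "1 / sqrt p \<le> k / sqrt q"
proof -
  have p: "0 < p" using assms by (smt (verit) mult_nonneg_nonneg zero_le_power2 mult_le_0_iff)
  have "sqrt q \<le> sqrt (k\<^sup>2 * p)" using assms by simp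
  also have "\<dots> = k * sqrt p" using assms by (simp add: real_sqrt_mult)
  finally have "sqrt q \<le> k * sqrt p" .
  then show ?thesis using assms p by (simp add: field_simps)
qed

lemma part1: assumes a: "a > 0" and x: "x \<noteq> 0"
  shows "\<bar>lam_int a x y\<bar> \<le> (3 * pi / 2) * (1 / sqrt \<bar>x\<bar>)"
proof -
  have sx: "sqrt \<bar>x\<bar> > 0" using x by simp
  have pi3: "pi > 3" by (rule pi_gt3)
  show ?thesis
  proof (cases "\<bar>y\<bar> \<le> \<bar>x\<bar> / 2")
    case True
    have "\<bar>lam_int a x y\<bar> \<le> (3/2) / sqrt \<bar>x\<bar> + 1 / sqrt \<bar>x\<bar>"
      unfolding lam_int_def
    proof (rule lint_bound)
      show "(\<lambda>l. phi a (x - l * y) - phi a x) \<in> borel_measurable borel" by measurable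
      fix l :: real assume l: "l \<in> {0..1}"
      have "\<bar>l*y\<bar> \<le> \<bar>y\<bar>" using l by (auto simp: abs_mult intro: mult_left_le_one_le)
      then have big: "\<bar>x\<bar> / 2 \<le> \<bar>x - l*y\<bar>" using True by linarith
      then have "x - l*y \<noteq> 0" using x by auto
      then have "\<bar>phi a (x - l*y)\<bar> \<le> 1 / sqrt \<bar>x - l*y\<bar>" using phi_bound a by auto
      also have "\<dots> \<le> (3/2) / sqrt \<bar>x\<bar>"
        by (rule inv_sqrt_le) (use x big in \<open>auto simp: power2_eq_square\<close>)
      finally have "\<bar>phi a (x - l*y)\<bar> \<le> (3/2) / sqrt \<bar>x\<bar>" .
      moreover have "\<bar>phi a x\<bar> \<le> 1 / sqrt \<bar>x\<bar>" using phi_bound a x by auto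
      ultimately show "\<bar>phi a (x - l * y) - phi a x\<bar> \<le> (3/2) / sqrt \<bar>x\<bar> + 1 / sqrt \<bar>x\<bar>" by linarith
    qed
    also have "\<dots> \<le> (3 * pi / 2) * (1 / sqrt \<bar>x\<bar>)"
      using sx pi3 by (simp add: field_simps)
    finally show ?thesis .
  next
    case False
    then have y: "y \<noteq> 0" by auto
    have hi: "((\<lambda>l. phi a (x - l*y) - phi a x) has_integral
              (Phi a x - Phi a (x - y))/y - phi a x) {0..1}"
      using has_integral_diff[OF phi_int[OF a y, of x] has_integral_const_real[of "phi a x" 0 1]] by simp
    have si: "set_integrable lborel {0..1::real} (\<lambda>l. phi a (x - l*y) - phi a x)"
      unfolding set_integrable_def
      apply (rule integrableI_bounded_set_indicator[where B="2/a"])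
         apply simp_all
      apply (rule AE_I2)
      subgoal for l using phi_bound_a[OF a, of "x - l*y"] phi_bound_a[OF a, of x] by arith
      done
    have eq: "lam_int a x y = (Phi a x - Phi a (x - y))/y - phi a x"
      unfolding lam_int_def set_borel_integral_eq_integral(2)[OF si] using hi by (rule integral_unique)
    have "\<bar>(Phi a x - Phi a (x - y))/y - phi a x\<bar> \<le> \<bar>Phi a x - Phi a (x - y)\<bar> / \<bar>y\<bar> + \<bar>phi a x\<bar>"
      using abs_triangle_ineq4[of "(Phi a x - Phi a (x - y))/y" "phi a x"] by (simp add: abs_divide)
    also have "\<bar>Phi a x - Phi a (x - y)\<bar> / \<bar>y\<bar> \<le> 2 * sqrt \<bar>y\<bar> / \<bar>y\<bar>"
      using Phi_hoelder[OF a, of x "x - y"] y by (simp add: divide_right_mono)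
    also have "2 * sqrt \<bar>y\<bar> / \<bar>y\<bar> = 2 * (1 / sqrt \<bar>y\<bar>)"
    proof -
      have s: "sqrt \<bar>y\<bar> * sqrt \<bar>y\<bar> = \<bar>y\<bar>" by simp
      show ?thesis using s y by (simp add: field_simps)
    qed
    also have "1 / sqrt \<bar>y\<bar> \<le> (3/2) / sqrt \<bar>x\<bar>"
      by (rule inv_sqrt_le) (use x False in \<open>auto simp: power2_eq_square\<close>)
    also have "\<bar>phi a x\<bar> \<le> 1 / sqrt \<bar>x\<bar>" using phi_bound a x by auto
    finally have "\<bar>lam_int a x y\<bar> \<le> 2 * ((3/2) / sqrt \<bar>x\<bar>) + 1 / sqrt \<bar>x\<bar>" 
      unfolding eq by simp
    also have "\<dots> \<le> (3 * pi / 2) * (1 / sqrt \<bar>x\<bar>)"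
      using sx pi3 by (simp add: field_simps)
    finally show ?thesis .
  qed
qed

lemma r_lip: assumes c: "c > 0" and p: "p \<ge> c" and q: "q \<ge> c" and h: "h \<ge> 0"
  shows "\<bar>1/(sqrt p + h) - 1/(sqrt q + h)\<bar> \<le> \<bar>p - q\<bar> / (c * sqrt c)"
proof -
  define sp sq sc where "sp = sqrt p" and "sq = sqrt q" and "sc = sqrt c"
  have sc: "sc > 0" "sc * sc = c" using c by (auto simp: sc_def)
  have spc: "sp \<ge> sc" "sq \<ge> sc" using p q by (auto simp: sp_def sq_def sc_def)
  have pp: "sp * sp = p" "sq * sq = q" using p q c by (auto simp: sp_def sq_def)
  have pos: "sp + h > 0" "sq + h > 0" "sp + sq > 0" using spc sc h by auto
  have e1: "1/(sp + h) - 1/(sq + h) = (sq - sp) / ((sp + h) * (sq + h))"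
    using pos by (simp add: field_simps)
  have e2: "sq - sp = (q - p) / (sp + sq)"
    using pos pp by (simp add: field_simps)
  have "\<bar>1/(sp + h) - 1/(sq + h)\<bar> = \<bar>p - q\<bar> / ((sp + sq) * ((sp + h) * (sq + h)))"
    unfolding e1 e2 using pos by (simp add: abs_divide abs_mult abs_minus_commute)
  also have "\<dots> \<le> \<bar>p - q\<bar> / (c * sc)"
  proof (rule divide_left_mono)
    have "c * sc \<le> (sp + sq) * (sc * sc)"
    proof -
      have "sc \<le> sp + sq" using sc spc by linarith
      then have "c * sc \<le> c * (sp + sq)" using c by (simp add: mult_left_mono)
      then show ?thesis using sc by (simp add: algebra_simps)
    qed
    also have "sc * sc \<le> (sp + h) * (sq + h)" using sc spc h by (intro mult_mono) auto
    then have "(sp + sq) * (sc * sc) \<le> (sp + sq) * ((sp + h) * (sq + h))" using pos by simp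
    finally show "c * sc \<le> (sp + sq) * ((sp + h) * (sq + h))" .
  qed (use c sc pos in auto)
  finally show ?thesis by (simp add: sp_def sq_def sc_def)
qed

lemma phi_lip: assumes h: "h \<ge> 0" and d: "\<delta> > 0"
  and x0: "\<bar>x\<bar> \<ge> \<delta>" "\<bar>x - 1\<bar> \<ge> \<delta>" "\<bar>x + 1\<bar> \<ge> \<delta>" and u: "\<bar>u - x\<bar> < \<delta>/2"
  shows "\<bar>phi h u - phi h x\<bar> \<le> \<bar>u - x\<bar> / ((\<delta>/2) * sqrt (\<delta>/2))"
proof (cases "\<bar>x\<bar> \<le> 1")
  case True
  then have x1: "\<bar>x\<bar> \<le> 1 - \<delta>" using x0 by linarith
  then have u1: "\<bar>u\<bar> \<le> 1" using u by linarith
  have sg: "sgn u = sgn x" using x0(1) u d unfolding abs_if by (auto simp: sgn_if split: if_splits)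
  have ne: "\<bar>x\<bar> \<ge> \<delta>/2" "\<bar>u\<bar> \<ge> \<delta>/2" using x0 u d by linarith+
  have "phi h u - phi h x = sgn x * (1/(sqrt \<bar>u\<bar> + h) - 1/(sqrt \<bar>x\<bar> + h))"
    using True u1 sg by (simp add: phi_def divide_inverse right_diff_distrib)
  then have "\<bar>phi h u - phi h x\<bar> = \<bar>sgn x\<bar> * \<bar>1/(sqrt \<bar>u\<bar> + h) - 1/(sqrt \<bar>x\<bar> + h)\<bar>"
    by (simp only: abs_mult)
  also have "\<dots> \<le> 1 * \<bar>1/(sqrt \<bar>u\<bar> + h) - 1/(sqrt \<bar>x\<bar> + h)\<bar>"
    by (intro mult_right_mono) (auto simp: sgn_if)
  also have "\<dots> \<le> \<bar>\<bar>u\<bar> - \<bar>x\<bar>\<bar> / ((\<delta>/2) * sqrt (\<delta>/2))"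
    using r_lip[of "\<delta>/2" "\<bar>u\<bar>" "\<bar>x\<bar>" h] ne d h by simp
  also have "\<dots> \<le> \<bar>u - x\<bar> / ((\<delta>/2) * sqrt (\<delta>/2))"
    using d by (intro divide_right_mono) auto
  finally show ?thesis .
next
  case False
  then have "\<bar>x\<bar> \<ge> 1 + \<delta>" using x0 by linarith
  then have "\<bar>u\<bar> > 1" using u d by linarith
  then show ?thesis using False d by (simp add: phi_def)
qed

lemma cdf_interval:
  assumes M: "prob_space M" and X[measurable]: "X \<in> borel_measurable M" and ab: "a \<le> b"
  shows "measure M {w\<in>space M. a < X w \<and> X w \<le> b} = cdf (distr M borel X) b - cdf (distr M borel X) a"
proof -
  interpret prob_space M by (rule M)
  have c: "cdf (distr M borel X) t = measure M {w\<in>space M. X w \<le> t}" for t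
    unfolding cdf_def by (subst measure_distr) (auto intro!: arg_cong[where f="measure M"])
  have "{w\<in>space M. a < X w \<and> X w \<le> b} = {w\<in>space M. X w \<le> b} - {w\<in>space M. X w \<le> a}"
    by auto
  also have "measure M \<dots> = measure M {w\<in>space M. X w \<le> b} - measure M {w\<in>space M. X w \<le> a}"
    by (rule finite_measure_Diff) (use ab in auto)
  finally show ?thesis unfolding c .
qed

lemma small_interval:
  assumes M: "prob_space M" and X[measurable]: "X \<in> borel_measurable M"
    and cont: "isCont (cdf (distr M borel X)) x0" and eps: "\<epsilon> > 0"
  shows "\<exists>s>0. \<forall>\<delta>. 0 < \<delta> \<longrightarrow> \<delta> < s \<longrightarrow> measure M {w\<in>space M. x0 - \<delta> < X w \<and> X w \<le> x0 + \<delta>} < \<epsilon>"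
proof -
  let ?F = "cdf (distr M borel X)"
  obtain s where s: "s > 0" "\<And>z. dist z x0 < s \<Longrightarrow> dist (?F z) (?F x0) < \<epsilon>/2"
    using cont eps unfolding continuous_at_eps_delta by (meson half_gt_zero)
  show ?thesis
  proof (intro exI[of _ s] conjI allI impI)
    fix \<delta> :: real assume d: "0 < \<delta>" "\<delta> < s"
    have "measure M {w\<in>space M. x0 - \<delta> < X w \<and> X w \<le> x0 + \<delta>} = ?F (x0 + \<delta>) - ?F (x0 - \<delta>)"
      by (rule cdf_interval[OF M X]) (use d in auto)
    also have "\<dots> < \<epsilon>"
    proof -
      have "dist (?F (x0 + \<delta>)) (?F x0) < \<epsilon>/2" "dist (?F (x0 - \<delta>)) (?F x0) < \<epsilon>/2"
        using s(2) d by (auto simp: dist_real_def)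
      then show ?thesis unfolding dist_real_def abs_less_iff by linarith
    qed
    finally show "measure M {w\<in>space M. x0 - \<delta> < X w \<and> X w \<le> x0 + \<delta>} < \<epsilon>" .
  qed (rule s)
qed

lemma meas_lam:
  assumes X[measurable]: "X \<in> borel_measurable M" and Y[measurable]: "Y \<in> borel_measurable M"
  shows "(\<lambda>w. lam_int h (X w) (Y w)) \<in> borel_measurable M"
  unfolding lam_int_def set_lebesgue_integral_def by measurable

lemma P2_law:
  assumes M: "prob_space M" and X: "L2 M X" and Y: "L2 M Y"
  shows "P2 (law2 M X Y)"
proof -
  have [measurable]: "X \<in> borel_measurable M" "Y \<in> borel_measurable M" using X Y by (auto simp: L2_def)
  have i: "integrable M (\<lambda>w. (X w)\<^sup>2 + (Y w)\<^sup>2)" using X Y by (auto simp: L2_def)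
  show ?thesis unfolding P2_def law2_def
  proof (intro conjI)
    show "prob_space (distr M borel (\<lambda>w. (X w, Y w)))"
      by (rule prob_space.prob_space_distr[OF M]) measurable
    show "sets (distr M borel (\<lambda>w. (X w, Y w))) = sets borel" by simp
    show "integrable (distr M borel (\<lambda>w. (X w, Y w))) (\<lambda>z. (fst z)\<^sup>2 + (snd z)\<^sup>2)"
    proof (subst integrable_distr_eq)
      show "(\<lambda>z::real\<times>real. (fst z)\<^sup>2 + (snd z)\<^sup>2) \<in> borel_measurable borel"
        by (intro borel_measurable_continuous_onI continuous_intros)
    qed (use i in auto)
  qed
qed

lemma markov:
  assumes M: "prob_space M" and Y: "L2 M Y" and g: "\<gamma> > 0"
  shows "measure M {w\<in>space M. \<gamma>\<^sup>2 \<le> (Y w)\<^sup>2} \<le> (\<integral>w. (Y w)\<^sup>2 \<partial>M) / \<gamma>\<^sup>2"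
  by (rule integral_Markov_inequality_measure[where A="space M"]) (use Y g in \<open>auto simp: L2_def\<close>)

lemma good_bound:
  assumes h: "h \<ge> 0" and d: "\<delta> > 0" and e: "e > 0"
    and x0: "\<bar>x\<bar> \<ge> \<delta>" "\<bar>x - 1\<bar> \<ge> \<delta>" "\<bar>x + 1\<bar> \<ge> \<delta>"
    and y: "\<bar>y\<bar> < min (\<delta>/2) (e * ((\<delta>/2) * sqrt (\<delta>/2)) / 2)"
  shows "\<bar>lam_int h x y\<bar> \<le> e/2"
  unfolding lam_int_def
proof (rule lint_bound)
  show "(\<lambda>l. phi h (x - l * y) - phi h x) \<in> borel_measurable borel" by measurable
  fix l :: real assume l: "l \<in> {0..1}"
  let ?K = "(\<delta>/2) * sqrt (\<delta>/2)"
  have K: "?K > 0" using d by simp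
  have ly: "\<bar>(x - l*y) - x\<bar> \<le> \<bar>y\<bar>" using l by (auto simp: abs_mult intro: mult_left_le_one_le)
  then have "\<bar>phi h (x - l*y) - phi h x\<bar> \<le> \<bar>(x - l*y) - x\<bar> / ?K"
    using y by (intro phi_lip[OF h d x0]) auto
  also have "\<dots> \<le> \<bar>y\<bar> / ?K" using ly K by (simp add: divide_right_mono)
  also have "\<dots> \<le> e/2" using y K by (simp add: field_simps)
  finally show "\<bar>phi h (x - l * y) - phi h x\<bar> \<le> e/2" .
qed

lemma part2b:
  assumes M: "prob_space M" and LX: "L2 M X"
    and cont: "\<forall>x. isCont (cdf (distr M borel X)) x"
    and Hnn: "\<forall>\<mu>. P2 \<mu> \<longrightarrow> H \<mu> \<ge> 0"
    and e: "e > 0" and eta: "\<eta> > 0"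
  shows "\<exists>d>0. \<forall>Y. L2 M Y \<longrightarrow> 0 < L2norm M Y \<longrightarrow> L2norm M Y < d \<longrightarrow>
                 measure M {w \<in> space M. \<bar>lam_int (H (law2 M X Y)) (X w) (Y w)\<bar> > e} < \<eta>"
proof -
  interpret prob_space M by (rule M)
  have Xm[measurable]: "X \<in> borel_measurable M" using LX by (simp add: L2_def)
  have e4: "\<eta>/4 > 0" using eta by simp
  obtain s0 where s0: "s0 > 0" "\<And>\<delta>. 0 < \<delta> \<Longrightarrow> \<delta> < s0 \<Longrightarrow> measure M {w\<in>space M. 0 - \<delta> < X w \<and> X w \<le> 0 + \<delta>} < \<eta>/4"
    using small_interval[OF M Xm cont[rule_format, of 0] e4] by blast
  obtain s1 where s1: "s1 > 0" "\<And>\<delta>. 0 < \<delta> \<Longrightarrow> \<delta> < s1 \<Longrightarrow> measure M {w\<in>space M. 1 - \<delta> < X w \<and> X w \<le> 1 + \<delta>} < \<eta>/4"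
    using small_interval[OF M Xm cont[rule_format, of 1] e4] by blast
  obtain s2 where s2: "s2 > 0" "\<And>\<delta>. 0 < \<delta> \<Longrightarrow> \<delta> < s2 \<Longrightarrow> measure M {w\<in>space M. -1 - \<delta> < X w \<and> X w \<le> -1 + \<delta>} < \<eta>/4"
    using small_interval[OF M Xm cont[rule_format, of "-1"] e4] by blast
  define \<delta> where "\<delta> = min (min s0 s1) s2 / 2"
  have d: "\<delta> > 0" "\<delta> < s0" "\<delta> < s1" "\<delta> < s2" using s0 s1 s2 by (auto simp: \<delta>_def)
  define K where "K = (\<delta>/2) * sqrt (\<delta>/2)"
  have K: "K > 0" using d by (simp add: K_def)
  define \<gamma> where "\<gamma> = min (\<delta>/2) (e * K / 2)"
  have g: "\<gamma> > 0" using d K e by (simp add: \<gamma>_def)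
  define dd where "dd = \<gamma> * sqrt (\<eta>/4)"
  have dd: "dd > 0" using g eta by (simp add: dd_def)
  show ?thesis
  proof (intro exI[of _ dd] conjI allI impI)
    show "dd > 0" by (rule dd)
    fix Y assume LY: "L2 M Y" and "0 < L2norm M Y" and lt: "L2norm M Y < dd"
    have Ym[measurable]: "Y \<in> borel_measurable M" using LY by (simp add: L2_def)
    define h where "h = H (law2 M X Y)"
    have h: "h \<ge> 0" unfolding h_def using Hnn P2_law[OF M LX LY] by blast
    define I where "I = (\<integral>w. (Y w)\<^sup>2 \<partial>M)"
    have "sqrt I < sqrt (dd\<^sup>2)" using lt dd by (simp add: L2norm_def I_def)
    then have I: "I < dd\<^sup>2" by (simp only: real_sqrt_less_iff)
    have dd2: "dd\<^sup>2 = \<gamma>\<^sup>2 * (\<eta>/4)" using eta by (simp add: dd_def power_mult_distrib)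
    define B0 where "B0 = {w\<in>space M. 0 - \<delta> < X w \<and> X w \<le> 0 + \<delta>}"
    define B1 where "B1 = {w\<in>space M. 1 - \<delta> < X w \<and> X w \<le> 1 + \<delta>}"
    define B2 where "B2 = {w\<in>space M. -1 - \<delta> < X w \<and> X w \<le> -1 + \<delta>}"
    define BY where "BY = {w\<in>space M. \<gamma>\<^sup>2 \<le> (Y w)\<^sup>2}"
    have sets: "B0 \<in> sets M" "B1 \<in> sets M" "B2 \<in> sets M" "BY \<in> sets M"
      unfolding B0_def B1_def B2_def BY_def by measurable
    have sub: "{w \<in> space M. \<bar>lam_int h (X w) (Y w)\<bar> > e} \<subseteq> ((B0 \<union> B1) \<union> B2) \<union> BY"
    proof
      fix w assume w: "w \<in> {w \<in> space M. \<bar>lam_int h (X w) (Y w)\<bar> > e}"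
      show "w \<in> ((B0 \<union> B1) \<union> B2) \<union> BY"
      proof (rule ccontr)
        assume "w \<notin> ((B0 \<union> B1) \<union> B2) \<union> BY"
        then have n: "w \<notin> B0" "w \<notin> B1" "w \<notin> B2" "w \<notin> BY" by auto
        have x0: "\<bar>X w\<bar> \<ge> \<delta>" "\<bar>X w - 1\<bar> \<ge> \<delta>" "\<bar>X w + 1\<bar> \<ge> \<delta>"
          using n(1-3) w unfolding B0_def B1_def B2_def by auto
        have "(Y w)\<^sup>2 < \<gamma>\<^sup>2" using n(4) w unfolding BY_def by auto
        then have "\<bar>Y w\<bar>\<^sup>2 < \<gamma>\<^sup>2" by simp
        then have "\<bar>Y w\<bar> < \<gamma>" using power2_less_imp_less[of "\<bar>Y w\<bar>" \<gamma>] g by simp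
        then have "\<bar>lam_int h (X w) (Y w)\<bar> \<le> e/2"
          using good_bound[OF h d(1) e x0] unfolding \<gamma>_def K_def by simp
        then show False using w e by simp
      qed
    qed
    have "measure M {w \<in> space M. \<bar>lam_int h (X w) (Y w)\<bar> > e} \<le> measure M (((B0 \<union> B1) \<union> B2) \<union> BY)"
      by (rule finite_measure_mono[OF sub]) (use sets in auto)
    also have "\<dots> \<le> measure M ((B0 \<union> B1) \<union> B2) + measure M BY"
      by (rule measure_Un_le) (use sets in auto)
    also have "measure M ((B0 \<union> B1) \<union> B2) \<le> measure M (B0 \<union> B1) + measure M B2"
      by (rule measure_Un_le) (use sets in auto)
    also have "measure M (B0 \<union> B1) \<le> measure M B0 + measure M B1"
      by (rule measure_Un_le) (use sets in auto)
    also have "measure M BY \<le> I / \<gamma>\<^sup>2"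
      unfolding BY_def I_def by (rule markov[OF M LY g])
    also have "I / \<gamma>\<^sup>2 < \<eta>/4"
      using I dd2 g by (simp add: divide_less_eq mult.commute)
    finally have "measure M {w \<in> space M. \<bar>lam_int h (X w) (Y w)\<bar> > e}
        < measure M B0 + measure M B1 + measure M B2 + \<eta>/4" by simp
    moreover have "measure M B0 < \<eta>/4" "measure M B1 < \<eta>/4" "measure M B2 < \<eta>/4"
      unfolding B0_def B1_def B2_def using s0(2) s1(2) s2(2) d by auto
    ultimately show "measure M {w \<in> space M. \<bar>lam_int (H (law2 M X Y)) (X w) (Y w)\<bar> > e} < \<eta>"
      unfolding h_def by simp
  qed
qed

theorem lemmaA2:
  fixes M :: "'a measure"
  assumes "prob_space M"
  shows "(\<forall>a X Y. a > 0 \<longrightarrow> L2 M X \<longrightarrow> L2 M Y \<longrightarrow>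
            (AE w in M. X w \<noteq> 0 \<longrightarrow>
               \<bar>lam_int a (X w) (Y w)\<bar> \<le> (3 * pi / 2) * (1 / sqrt \<bar>X w\<bar>)))
       \<and> (\<forall>X (H :: (real \<times> real) measure \<Rightarrow> real).
            L2 M X \<longrightarrow>
            (\<forall>x. isCont (cdf (distr M borel X)) x) \<longrightarrow>
            (\<forall>\<mu>. P2 \<mu> \<longrightarrow> H \<mu> \<ge> 0) \<longrightarrow>
            (\<forall>e>0. \<exists>d>0. \<forall>Y. L2 M Y \<longrightarrow> 0 < L2norm M Y \<longrightarrow> L2norm M Y < d \<longrightarrow>
                 \<bar>H (law2 M X Y)\<bar> < e) \<longrightarrow>
            (\<forall>Y. L2 M Y \<longrightarrow>
                 (\<lambda>w. lam_int (H (law2 M X Y)) (X w) (Y w)) \<in> borel_measurable M) \<and>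
            (\<forall>e>0. \<forall>\<eta>>0. \<exists>d>0. \<forall>Y. L2 M Y \<longrightarrow> 0 < L2norm M Y \<longrightarrow> L2norm M Y < d \<longrightarrow>
                 measure M {w \<in> space M. \<bar>lam_int (H (law2 M X Y)) (X w) (Y w)\<bar> > e} < \<eta>))"
proof (intro conjI allI impI)
  fix a :: real and X Y :: "'a \<Rightarrow> real" assume "a > 0"
  then show "AE w in M. X w \<noteq> 0 \<longrightarrow> \<bar>lam_int a (X w) (Y w)\<bar> \<le> (3 * pi / 2) * (1 / sqrt \<bar>X w\<bar>)"
    using part1 by (intro AE_I2) auto
next
  fix X :: "'a \<Rightarrow> real" and H :: "(real \<times> real) measure \<Rightarrow> real" and Y
  assume "L2 M X" "L2 M Y"
  then show "(\<lambda>w. lam_int (H (law2 M X Y)) (X w) (Y w)) \<in> borel_measurable M"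
    by (intro meas_lam) (auto simp: L2_def)
next
  fix X :: "'a \<Rightarrow> real" and H :: "(real \<times> real) measure \<Rightarrow> real" and e \<eta> :: real
  assume "L2 M X" "\<forall>x. isCont (cdf (distr M borel X)) x" "\<forall>\<mu>. P2 \<mu> \<longrightarrow> H \<mu> \<ge> 0" "e > 0" "\<eta> > 0"
  then show "\<exists>d>0. \<forall>Y. L2 M Y \<longrightarrow> 0 < L2norm M Y \<longrightarrow> L2norm M Y < d \<longrightarrow>
                 measure M {w \<in> space M. \<bar>lam_int (H (law2 M X Y)) (X w) (Y w)\<bar> > e} < \<eta>"
    using part2b[OF assms] by blast
qed

end
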